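(* Let $\alpha\in\mathcal{L}^*(E_{\mathbb{Z}})$ with $|\alpha|\ge2$. Then there exists $n\ge0$ such that $$\alpha=\gamma_0\, i_1^{(n)}\cdots i_k^{(n)}\,\gamma_1,\qquad 2\le k\le 4,\ i_1,\dots,i_k\in\{0,1\},$$ where $\gamma_0$ is a final subpath (suffix) of $0^{(n)}$ or of $1^{(n)}$ and $\gamma_1$ is an initial subpath (prefix) of $0^{(n)}$ or of $1^{(n)}$, with $0\le|\gamma_0|,|\gamma_1|<2^n$ ($n$ need not be unique). Moreover, for a fixed such $n$, this expression of $\alpha$ in $i^{(n)}$-blocks is unique.
   Context: The two-sided Thue--Morse sequence $\omega=(\omega_k)_{k\in\mathbb{Z}}$ over $\{0,1\}$ is defined by $\omega_0=0$, $\omega_{2^n+j}=1-\omega_j$ for $n\ge0$, $0\le j<2^n$, and $\omega_{-i}=\omega_{i-1}$ for $i\ge1$. $\mathcal{L}^*(E_{\mathbb{Z}})$ denotes the set of finite nonempty words occurring in $\omega$. Blocks $i^{(n)}$: $0^{(0)}=0$, $1^{(0)}=1$, and inductively $0^{(n)}=0^{(n-1)}1^{(n-1)}$, $1^{(n)}=1^{(n-1)}0^{(n-1)}$ (concatenation); $|i^{(n)}|=2^n$. Empty $\gamma_0,\gamma_1$ are allowed. *)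

theory Defs
  imports Main "HOL-Library.Sublist"
begin

definition top_pow :: "nat \<Rightarrow> nat" where
  "top_pow k = (GREATEST n. (2::nat) ^ n \<le> k)"

text \<open>One-sided Thue--Morse: omega_0 = 0 and omega_(2^n+j) = 1 - omega_j for 0 \<le> j < 2^n,
  where for k \<ge> 1 we write k = 2^n + j with n = top_pow k.\<close>
function tm_nat :: "nat \<Rightarrow> nat" where
  "tm_nat k = (if k = 0 then 0 else 1 - tm_nat (k - 2 ^ top_pow k))"
  by auto
termination
  by (relation "measure id") auto

definition tm_omega :: "int \<Rightarrow> nat" where
  "tm_omega k = (if 0 \<le> k then tm_nat (nat k) else tm_nat (nat (- k) - 1))"

definition tm_lang :: "nat list set" where
  "tm_lang = {w. w \<noteq> [] \<and> (\<exists>m::int. \<forall>j < length w. w ! j = tm_omega (m + int j))}"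

fun tm_block :: "nat \<Rightarrow> nat \<Rightarrow> nat list" where
  "tm_block 0 i = [i]"
| "tm_block (Suc n) i = tm_block n i @ tm_block n (1 - i)"

definition block_decomp :: "nat \<Rightarrow> nat list \<Rightarrow> nat list \<Rightarrow> nat list \<Rightarrow> nat list \<Rightarrow> bool" where
  "block_decomp n \<alpha> g0 is g1 \<longleftrightarrow>
     2 \<le> length is \<and> length is \<le> 4 \<and> set is \<subseteq> {0, 1} \<and>
     (\<exists>i\<in>{0,1}. suffix g0 (tm_block n i)) \<and>
     (\<exists>i\<in>{0,1}. prefix g1 (tm_block n i)) \<and>
     length g0 < 2 ^ n \<and> length g1 < 2 ^ n \<and>
     \<alpha> = g0 @ concat (map (\<lambda>i. tm_block n i) is) @ g1"

end

theory Submission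
  imports Defs
begin

declare tm_nat.simps[simp del]

lemma top_pow_eq: "2^t \<le> k \<Longrightarrow> k < 2^(t+1) \<Longrightarrow> top_pow k = t"
  unfolding top_pow_def
proof (rule Greatest_equality)
  fix y assume "2^t \<le> k" "k < 2^(t+1)" "(2::nat)^y \<le> k"
  then have "(2::nat)^y < 2^(t+1)" by linarith
  then show "y \<le> t" using power_less_imp_less_exp[of "2::nat" y "t+1"] by simp
qed

lemma tm_nat_le1: "tm_nat k \<le> 1"
  by (subst tm_nat.simps) simp

lemma tm_nat_double: "tm_nat (2*k) = tm_nat k \<and> tm_nat (2*k+1) = 1 - tm_nat k"
proof (induction k rule: less_induct)
  case (less k)
  show ?case
  proof (cases "k = 0")
    case True
    have "top_pow 1 = 0" by (rule top_pow_eq) auto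
    then show ?thesis using True by (subst tm_nat.simps) (simp add: tm_nat.simps)
  next
    case False
    then obtain t where t: "2^t \<le> k" "k < 2^(t+1)" using ex_power_ivl1[of 2 k] by auto
    have tk: "top_pow k = t" using t by (rule top_pow_eq)
    have t2: "top_pow (2*k) = t+1" by (rule top_pow_eq) (use t in auto)
    have t3: "top_pow (2*k+1) = t+1" by (rule top_pow_eq) (use t in auto)
    have lt: "k - 2^t < k" using t False by simp
    have e1: "2*k - 2^(t+1) = 2*(k-2^t)" by simp
    have e2: "2*k+1 - 2^(t+1) = 2*(k-2^t)+1" using t by simp
    have k1: "tm_nat k = 1 - tm_nat (k - 2^t)" using False tk by (subst tm_nat.simps) simp
    have a: "tm_nat (2*k) = 1 - tm_nat (2*(k-2^t))" using False t2 e1 by (subst tm_nat.simps) simp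
    have b: "tm_nat (2*k+1) = 1 - tm_nat (2*(k-2^t)+1)" using False t3 e2 by (subst tm_nat.simps) simp
    show ?thesis using less.IH[OF lt] a b k1 tm_nat_le1[of "k - 2^t"] by auto
  qed
qed


definition sq :: "bool \<Rightarrow> int \<Rightarrow> nat" where
  "sq c x = (if 0 \<le> x then tm_nat (nat x) else if c then 1 - tm_nat (nat (-x) - 1) else tm_nat (nat (-x) - 1))"

lemma omega_sq: "tm_omega = sq False"
  by (rule ext) (simp add: sq_def tm_omega_def)

lemma sq_le1: "sq c x \<le> 1"
  using tm_nat_le1 by (simp add: sq_def)

lemma sq_even: "sq c (2*v) = sq (\<not>c) v"
proof (cases "0 \<le> v")
  case True
  have "nat (2*v) = 2 * nat v" using True by simp
  then show ?thesis using True tm_nat_double[of "nat v"] by (simp add: sq_def)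
next
  case False
  define t where "t = nat (-v)"
  have t1: "t \<ge> 1" using False t_def by simp
  have e: "nat (-(2*v)) - 1 = 2*(t-1)+1" using False t_def by simp
  have e2: "nat (-v) - 1 = t - 1" using t_def by simp
  show ?thesis using False e e2 tm_nat_double[of "t-1"] tm_nat_le1[of "t-1"]
    by (auto simp add: sq_def)
qed

lemma sq_odd: "sq c (2*v+1) = 1 - sq c (2*v)"
proof (cases "0 \<le> v")
  case True
  have "nat (2*v) = 2 * nat v" "nat (2*v+1) = 2 * nat v + 1" using True by simp_all
  then show ?thesis using True tm_nat_double[of "nat v"] by (simp add: sq_def)
next
  case False
  define t where "t = nat (-v)"
  have t1: "t \<ge> 1" using False t_def by simp
  have e: "nat (-(2*v)) - 1 = 2*(t-1)+1" using False t_def by simp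
  have e3: "nat (-(2*v+1)) - 1 = 2*(t-1)" using False t_def by simp
  show ?thesis using False e e3 tm_nat_double[of "t-1"] tm_nat_le1[of "t-1"]
    by (auto simp add: sq_def)
qed

lemma sq_pow: "\<exists>c'. \<forall>z. sq c (2^n * z) = sq c' z"
proof (induction n arbitrary: c)
  case 0 then show ?case by auto
next
  case (Suc n)
  obtain c' where "\<forall>z. sq c (2^n * z) = sq c' z" using Suc by blast
  then have "\<forall>z. sq c (2^Suc n * z) = sq (\<not>c') z"
    by (metis mult.assoc mult.commute power_Suc sq_even)
  then show ?case by blast
qed

definition seg :: "(int \<Rightarrow> nat) \<Rightarrow> int \<Rightarrow> nat \<Rightarrow> nat list" where
  "seg s x l = map (\<lambda>j. s (x + int j)) [0..<l]"

lemma seg_length[simp]: "length (seg s x l) = l"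
  by (simp add: seg_def)

lemma seg_add: "seg s x (a+b) = seg s x a @ seg s (x + int a) b"
  by (induction b) (auto simp: seg_def add.assoc)

lemma tm_block_length[simp]: "length (tm_block n i) = 2^n"
  by (induction n arbitrary: i) auto

lemma tm_block_ne: "tm_block n i \<noteq> []"
  using tm_block_length[of n i] by (metis length_0_conv power_not_zero zero_neq_numeral)

lemma tm_block_hd: "hd (tm_block n i) = i"
  by (induction n arbitrary: i) (auto simp: hd_append tm_block_ne)

lemma tm_block_inj: "tm_block n a = tm_block n b \<Longrightarrow> a = b"
  by (metis tm_block_hd)

lemma seg_block: "seg (sq c) (2^n * z) (2^n) = tm_block n (sq c (2^n * z))"
proof (induction n arbitrary: z)
  case 0 then show ?case by (simp add: seg_def)
next
  case (Suc n)
  obtain c' where c': "\<forall>z. sq c (2^n * z) = sq c' z" using sq_pow by blast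
  have "seg (sq c) (2^Suc n * z) (2^Suc n) = seg (sq c) (2^n*(2*z)) (2^n) @ seg (sq c) (2^n*(2*z+1)) (2^n)"
  proof -
    have a: "(2::nat)^Suc n = 2^n + 2^n" by simp
    have b: "(2::int)^Suc n * z = 2^n*(2*z)" by (simp add: algebra_simps)
    have b2: "(2::int)^n*(2*z) + int (2^n) = 2^n*(2*z+1)" by (simp add: algebra_simps)
    show ?thesis unfolding a seg_add b b2 ..
  qed
  also have "\<dots> = tm_block n (sq c (2^n*(2*z))) @ tm_block n (sq c (2^n*(2*z+1)))"
    using Suc.IH by simp
  also have "sq c (2^n*(2*z+1)) = 1 - sq c (2^n*(2*z))" using c' sq_odd by simp
  finally show ?case by (simp add: mult.assoc mult.left_commute[of 2])
qed


lemma sq_neq_aux: "1 - (x::nat) \<noteq> x" by (cases x) auto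

lemma sq_three: "sq c y \<noteq> sq c (y+1) \<Longrightarrow> sq c (y+2) \<noteq> sq c (y+3) \<Longrightarrow> even y"
proof (rule ccontr)
  assume h1: "sq c y \<noteq> sq c (y+1)" and h2: "sq c (y+2) \<noteq> sq c (y+3)" and "\<not> even y"
  then obtain z where y: "y = 2*z+1" by (metis oddE)
  let ?d = "\<not>c"
  have a1: "sq c y = 1 - sq ?d z" using y sq_odd[of c z] sq_even[of c z] by simp
  have a2: "sq c (y+1) = sq ?d (z+1)" using y sq_even[of c "z+1"] by (simp add: algebra_simps)
  have a3: "sq c (y+2) = 1 - sq ?d (z+1)" using y sq_odd[of c "z+1"] sq_even[of c "z+1"] by (simp add: algebra_simps)
  have a4: "sq c (y+3) = sq ?d (z+2)" using y sq_even[of c "z+2"] by (simp add: algebra_simps)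
  have e1: "sq ?d z = sq ?d (z+1)" using h1 a1 a2 sq_le1[of ?d z] sq_le1[of ?d "z+1"] by auto
  have e2: "sq ?d (z+1) = sq ?d (z+2)" using h2 a3 a4 sq_le1[of ?d "z+2"] sq_le1[of ?d "z+1"] by auto
  show False
  proof (cases "even z")
    case True
    then obtain w where w: "z = 2*w" by blast
    have "sq ?d (2*w+1) = 1 - sq ?d (2*w)" by (rule sq_odd)
    then show False using e1 w sq_neq_aux[of "sq ?d (2*w)"] by simp
  next
    case False
    then obtain w where w: "z + 1 = 2*w" by (metis even_plus_one_iff evenE)
    have "sq ?d (2*w+1) = 1 - sq ?d (2*w)" by (rule sq_odd)
    moreover have "z+2 = 2*w+1" using w by simp
    ultimately have "sq ?d (2*w) = 1 - sq ?d (2*w)" using e2 w by metis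
    then show False using sq_neq_aux[of "sq ?d (2*w)"] by simp
  qed
qed

lemma seg_block_val: "seg (sq c) (2^n * y) (2^n) = tm_block n d \<Longrightarrow> sq c (2^n * y) = d"
  using seg_block tm_block_inj by metis

lemma seg_split2: "seg s x (2*l) = A @ B \<Longrightarrow> length A = l \<Longrightarrow> seg s x l = A \<and> seg s (x + int l) l = B"
  using seg_add[of s x l l] by (simp add: mult_2)

lemma key: "seg (sq c) x (2*2^n) = tm_block n a @ tm_block n b \<Longrightarrow> (2::int)^n dvd x"
proof (induction n arbitrary: x a b)
  case 0 then show ?case by simp
next
  case (Suc n)
  have h: "seg (sq c) x (2*2^Suc n) = tm_block (Suc n) a @ tm_block (Suc n) b" by fact
  from seg_split2[OF h] have s1: "seg (sq c) x (2^Suc n) = tm_block n a @ tm_block n (1-a)"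
    and s2: "seg (sq c) (x + 2^Suc n) (2^Suc n) = tm_block n b @ tm_block n (1-b)" by auto
  from s1 have s1': "seg (sq c) x (2*2^n) = tm_block n a @ tm_block n (1-a)" by simp
  from s2 have s2': "seg (sq c) (x + 2*2^n) (2*2^n) = tm_block n b @ tm_block n (1-b)" by simp
  from Suc.IH[OF s1'] obtain y where y: "x = 2^n * y" by blast
  from seg_split2[OF s1'] have b0: "seg (sq c) (2^n*y) (2^n) = tm_block n a"
     and b1: "seg (sq c) (2^n*(y+1)) (2^n) = tm_block n (1-a)" using y by (auto simp: algebra_simps)
  from seg_split2[OF s2'] have b2: "seg (sq c) (2^n*(y+2)) (2^n) = tm_block n b"
     and b3: "seg (sq c) (2^n*(y+3)) (2^n) = tm_block n (1-b)" using y by (auto simp: algebra_simps)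
  obtain c' where c': "\<forall>z. sq c (2^n * z) = sq c' z" using sq_pow by blast
  have v0: "sq c' y = a" using seg_block_val[OF b0] c' by simp
  have v1: "sq c' (y+1) = 1-a" using seg_block_val[OF b1] c' by simp
  have v2: "sq c' (y+2) = b" using seg_block_val[OF b2] c' by simp
  have v3: "sq c' (y+3) = 1-b" using seg_block_val[OF b3] c' by simp
  have "even y" by (rule sq_three[of c']) (use v0 v1 v2 v3 sq_neq_aux[of a] sq_neq_aux[of b] in auto)
  then obtain w where "y = 2*w" by blast
  then have "x = 2^Suc n * w" using y by simp
  then show ?case by simp
qed


lemma seg_take_drop: "a \<le> l \<Longrightarrow> take a (seg s x l) = seg s x a \<and> drop a (seg s x l) = seg s (x + int a) (l - a)"
  using seg_add[of s x a "l-a"] by simp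

lemma concat_blocks_length: "length (concat (map (tm_block n) is)) = length is * 2^n"
  by (induction "is") auto

lemma concat_blocks_inj: "length is = length is' \<Longrightarrow> concat (map (tm_block n) is) = concat (map (tm_block n) is') \<Longrightarrow> is = is'"
proof (induction "is" arbitrary: is')
  case Nil then show ?case by simp
next
  case (Cons i "is")
  then obtain i' js where js: "is' = i' # js" by (cases is') auto
  with Cons.prems have "tm_block n i @ concat (map (tm_block n) is) = tm_block n i' @ concat (map (tm_block n) js)"
    by simp
  then have "tm_block n i = tm_block n i'" "concat (map (tm_block n) is) = concat (map (tm_block n) js)"
    by (simp_all add: append_eq_append_conv)
  then show ?case using Cons js tm_block_inj by auto
qed

lemma decomp_dvd:
  assumes d: "block_decomp n \<alpha> g0 is g1" and a: "\<alpha> = seg (sq False) m (length \<alpha>)"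
  shows "(2::int)^n dvd (m + int (length g0))"
proof -
  from d have len: "2 \<le> length is" and eq: "\<alpha> = g0 @ concat (map (tm_block n) is) @ g1"
    by (auto simp: block_decomp_def)
  then obtain i1 i2 rest where isd: "is = i1 # i2 # rest"
    by (metis Suc_le_length_iff numeral_2_eq_2)
  let ?p = "length g0"
  have dr: "drop ?p \<alpha> = tm_block n i1 @ tm_block n i2 @ concat (map (tm_block n) rest) @ g1"
    using eq isd by simp
  have lenge: "?p + 2*2^n \<le> length \<alpha>" using eq isd by simp
  have "drop ?p \<alpha> = seg (sq False) (m + int ?p) (length \<alpha> - ?p)"
    using seg_take_drop[of ?p "length \<alpha>" "sq False" m] a lenge by (metis le_add1 le_trans)
  then have "take (2*2^n) (seg (sq False) (m + int ?p) (length \<alpha> - ?p)) = tm_block n i1 @ tm_block n i2"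
    using dr by (metis append_assoc append_eq_conv_conj length_append mult_2 tm_block_length)
  moreover have "take (2*2^n) (seg (sq False) (m + int ?p) (length \<alpha> - ?p)) = seg (sq False) (m + int ?p) (2*2^n)"
    using seg_take_drop lenge by simp
  ultimately show ?thesis using key by metis
qed

lemma dvd_close: "(N::int) dvd (m + p) \<Longrightarrow> N dvd (m + p') \<Longrightarrow> 0 \<le> p \<Longrightarrow> p < N \<Longrightarrow> 0 \<le> p' \<Longrightarrow> p' < N \<Longrightarrow> p = p'"
proof -
  assume h: "N dvd (m + p)" "N dvd (m + p')" "0 \<le> p" "p < N" "0 \<le> p'" "p' < N"
  then have "N dvd (p - p')" by (metis dvd_diff add_diff_cancel_left)
  then obtain u where u: "p - p' = N * u" by blast
  have "u = 0"
  proof (rule ccontr)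
    assume "u \<noteq> 0"
    then have "u \<ge> 1 \<or> u \<le> -1" by linarith
    then show False
    proof
      assume "u \<ge> 1" then have "N * u \<ge> N" using h by (simp add: mult_le_cancel_left1)
      then show False using u h by linarith
    next
      assume "u \<le> -1" then have "N * u \<le> -N" using h
        by (metis mult.commute mult_le_cancel_right mult_minus1 order_less_le_trans zero_le_one le_less_trans mult_le_cancel_left less_le_not_le linorder_not_le mult_minus_right mult_1_right)
      then show False using u h by linarith
    qed
  qed
  then show ?thesis using u by simp
qed

lemma uniq:
  assumes d: "block_decomp n \<alpha> g0 is g1" and d': "block_decomp n \<alpha> g0' is' g1'"
    and a: "\<alpha> = seg (sq False) m (length \<alpha>)"
  shows "g0 = g0' \<and> is = is' \<and> g1 = g1'"
proof -
  have p: "length g0 = length g0'"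
  proof -
    have "(2::int)^n dvd (m + int (length g0))" "(2::int)^n dvd (m + int (length g0'))"
      using decomp_dvd[OF d a] decomp_dvd[OF d' a] by auto
    moreover have "int (length g0) < 2^n" "int (length g0') < 2^n"
      using d d' unfolding block_decomp_def by (metis of_nat_less_iff of_nat_numeral of_nat_power)+
    ultimately show ?thesis using dvd_close[of "2^n" m "int (length g0)" "int (length g0')"] by simp
  qed
  from d have eq: "\<alpha> = g0 @ concat (map (tm_block n) is) @ g1" and l1: "length g1 < 2^n"
    by (auto simp: block_decomp_def)
  from d' have eq': "\<alpha> = g0' @ concat (map (tm_block n) is') @ g1'" and l1': "length g1' < 2^n"
    by (auto simp: block_decomp_def)
  have g0: "g0 = g0'" using eq eq' p by (metis append_eq_append_conv)
  then have r: "concat (map (tm_block n) is) @ g1 = concat (map (tm_block n) is') @ g1'" using eq eq' by simp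
  then have "length is * 2^n + length g1 = length is' * 2^n + length g1'"
    by (metis concat_blocks_length length_append)
  then have "(length is * 2^n + length g1) div 2^n = (length is' * 2^n + length g1') div 2^n" by simp
  then have li: "length is = length is'" using l1 l1' by simp
  then have "concat (map (tm_block n) is) = concat (map (tm_block n) is') \<and> g1 = g1'"
    using r by (simp add: append_eq_append_conv concat_blocks_length)
  then show ?thesis using g0 li concat_blocks_inj by blast
qed


lemma seg_blocks: "seg (sq c) (2^n*y) (kk*2^n) = concat (map (tm_block n) (map (\<lambda>j. sq c (2^n*(y + int j))) [0..<kk]))"
proof (induction kk arbitrary: y)
  case 0 then show ?case by (simp add: seg_def)
next
  case (Suc kk)
  have "seg (sq c) (2^n*y) (Suc kk*2^n) = seg (sq c) (2^n*y) (2^n) @ seg (sq c) (2^n*(y+1)) (kk*2^n)"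
    using seg_add[of "sq c" "2^n*y" "2^n" "kk*2^n"] by (simp add: algebra_simps)
  also have "\<dots> = tm_block n (sq c (2^n*y)) @ concat (map (tm_block n) (map (\<lambda>j. sq c (2^n*(y + 1 + int j))) [0..<kk]))"
    using seg_block Suc.IH by simp
  also have "\<dots> = concat (map (tm_block n) (map (\<lambda>j. sq c (2^n*(y + int j))) [0..<Suc kk]))"
    by (simp add: upt_conv_Cons map_Suc_upt[symmetric] del: upt_Suc) (simp add: o_def algebra_simps)
  finally show ?case .
qed

definition KK :: "int \<Rightarrow> nat \<Rightarrow> nat \<Rightarrow> int" where
  "KK m L n = (m + int L) div 2^n + (-m) div 2^n"

lemma KK_step: "KK m L (Suc n) \<le> KK m L n div 2 \<and> (KK m L n \<ge> 5 \<longrightarrow> KK m L (Suc n) \<ge> 2)"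
proof -
  have d: "\<And>x::int. x div 2^Suc n = (x div 2^n) div 2"
    by (subst power_Suc2, rule zdiv_zmult2_eq) simp
  have aux: "\<And>a b::int. a div 2 + b div 2 \<le> (a+b) div 2 \<and> (5 \<le> a+b \<longrightarrow> 2 \<le> a div 2 + b div 2)"
    by presburger
  show ?thesis unfolding KK_def d by (rule aux)
qed

lemma KK_bound: "KK m L n \<le> int L div 2^n"
proof (induction n)
  case 0 then show ?case by (simp add: KK_def)
next
  case (Suc n)
  have "KK m L (Suc n) \<le> KK m L n div 2" using KK_step by blast
  also have "\<dots> \<le> (int L div 2^n) div 2" using Suc by (rule zdiv_mono1) simp
  also have "\<dots> = int L div 2^Suc n" by (subst power_Suc2, rule zdiv_zmult2_eq[symmetric]) simp
  finally show ?case .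
qed

lemma KK_choose: "L \<ge> 2 \<Longrightarrow> \<exists>n. 2 \<le> KK m L n \<and> KK m L n \<le> 4"
proof -
  assume L: "L \<ge> 2"
  have "KK m L L \<le> int L div 2^L" by (rule KK_bound)
  also have "\<dots> = 0" using less_exp[of L] by (simp add: div_pos_pos_trivial)
  finally have ex: "KK m L L \<le> 4" by simp
  define n0 where "n0 = (LEAST n. KK m L n \<le> 4)"
  have a: "KK m L n0 \<le> 4" unfolding n0_def by (rule LeastI[of _ L]) (rule ex)
  show ?thesis
  proof (cases n0)
    case 0
    then have "KK m L n0 = int L" by (simp add: KK_def)
    then show ?thesis using a L by (intro exI[of _ n0]) auto
  next
    case (Suc k)
    then have "\<not> KK m L k \<le> 4" using not_less_Least[of k "\<lambda>n. KK m L n \<le> 4"] n0_def by simp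
    then have "KK m L n0 \<ge> 2" using KK_step[of m L k] Suc by simp
    then show ?thesis using a by auto
  qed
qed


lemma exist:
  assumes L: "L \<ge> 2"
  shows "\<exists>n g0 is g1. block_decomp n (seg (sq False) m L) g0 is g1"
proof -
  obtain n where n: "2 \<le> KK m L n" "KK m L n \<le> 4" using KK_choose[OF L] by blast
  define N where "N = (2::int)^n"
  have Npos: "N > 0" unfolding N_def by simp
  define y where "y = - ((-m) div N)"
  define e where "e = (m + int L) div N"
  have K: "e - y = KK m L n" unfolding KK_def e_def y_def N_def by simp
  have dm: "N * ((-m) div N) + (-m) mod N = -m" by (rule mult_div_mod_eq)
  have mm: "0 \<le> (-m) mod N" "(-m) mod N < N" using Npos by simp_all
  have ny: "N*y = - (N*((-m) div N))" unfolding y_def by simp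
  have y1: "m \<le> N*y" "N*y < m + N" using dm mm ny by linarith+
  have de: "N * e + (m + int L) mod N = m + int L" unfolding e_def by (rule mult_div_mod_eq)
  have me: "0 \<le> (m + int L) mod N" "(m + int L) mod N < N" using Npos by simp_all
  have e1: "N*e \<le> m + int L" "m + int L < N*e + N" using de me by linarith+
  define p where "p = nat (N*y - m)"
  define kk where "kk = nat (e - y)"
  define r where "r = nat (m + int L - N*e)"
  have ip: "int p = N*y - m" unfolding p_def using y1 by simp
  have ikk: "int kk = e - y" unfolding kk_def using n K by simp
  have ir: "int r = m + int L - N*e" unfolding r_def using e1 by simp
  have iN: "int (2^n) = N" unfolding N_def by simp
  have pl: "p < 2^n" using ip y1 iN by linarith
  have rl: "r < 2^n" using ir e1 iN by linarith
  have kk2: "2 \<le> kk" "kk \<le> 4" using ikk n K by linarith+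
  have kN: "int kk * N = N*e - N*y" unfolding ikk by (simp add: algebra_simps)
  have "int L = int p + int kk * N + int r" using ip kN ir by linarith
  then have "int L = int (p + (kk*2^n + r))" using iN by simp
  then have Lsum: "L = p + (kk*2^n + r)" by (simp only: of_nat_eq_iff)
  have st1: "m + int p = 2^n*y" using ip N_def by simp
  have st2: "2^n*y + int (kk*2^n) = N*e" using kN iN N_def by (simp add: algebra_simps)
  define s where "s = sq False"
  define bs where "bs = map (\<lambda>j. s (2^n*(y + int j))) [0..<kk]"
  have alpha: "seg s m L = seg s m p @ concat (map (tm_block n) bs) @ seg s (N*e) r"
    unfolding Lsum seg_add st1 st2 bs_def s_def seg_blocks ..
  have g0: "suffix (seg s m p) (tm_block n (s (2^n*(y-1))))"
  proof -
    have "seg s (2^n*(y-1)) (2^n) = seg s (2^n*(y-1)) (2^n - p) @ seg s (2^n*(y-1) + int (2^n - p)) p"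
      using seg_add[of s "2^n*(y-1)" "2^n - p" p] pl by simp
    moreover have "2^n*(y-1) + int (2^n - p) = m" using ip pl iN N_def by (simp add: algebra_simps of_nat_diff)
    ultimately have "tm_block n (s (2^n*(y-1))) = seg s (2^n*(y-1)) (2^n - p) @ seg s m p"
      unfolding s_def seg_block by simp
    then show ?thesis unfolding suffix_def by blast
  qed
  have g1: "prefix (seg s (N*e) r) (tm_block n (s (2^n*e)))"
  proof -
    have "seg s (2^n*e) (2^n) = seg s (2^n*e) r @ seg s (2^n*e + int r) (2^n - r)"
      using seg_add[of s "2^n*e" r "2^n - r"] rl by simp
    then have "tm_block n (s (2^n*e)) = seg s (N*e) r @ seg s (2^n*e + int r) (2^n - r)"
      unfolding s_def seg_block N_def by simp
    then show ?thesis unfolding prefix_def by blast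
  qed
  have v: "\<And>x. s x \<in> {0,1}" proof -
    fix x have "s x \<le> 1" unfolding s_def by (rule sq_le1)
    then show "s x \<in> {0,1}" by auto
  qed
  have "block_decomp n (seg s m L) (seg s m p) bs (seg s (N*e) r)"
    unfolding block_decomp_def
  proof (intro conjI)
    show "2 \<le> length bs" "length bs \<le> 4" using kk2 unfolding bs_def by simp_all
    show "set bs \<subseteq> {0,1}" unfolding bs_def set_map image_subset_iff using v by (simp only: Ball_def) (metis)
    show "\<exists>i\<in>{0,1}. suffix (seg s m p) (tm_block n i)" using g0 v by blast
    show "\<exists>i\<in>{0,1}. prefix (seg s (N*e) r) (tm_block n i)" using g1 v by blast
    show "length (seg s m p) < 2^n" "length (seg s (N*e) r) < 2^n" using pl rl by simp_all
  qed (rule alpha)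
  then show ?thesis unfolding s_def by blast
qed


theorem proposition3p5:
  fixes \<alpha> :: "nat list"
  assumes "\<alpha> \<in> tm_lang" and "2 \<le> length \<alpha>"
  shows "(\<exists>n g0 is g1. block_decomp n \<alpha> g0 is g1) \<and>
         (\<forall>n g0 is g1 g0' is' g1'.
             block_decomp n \<alpha> g0 is g1 \<and> block_decomp n \<alpha> g0' is' g1' \<longrightarrow>
             g0 = g0' \<and> is = is' \<and> g1 = g1')"
proof -
  from assms(1) obtain m :: int where m: "\<forall>j < length \<alpha>. \<alpha> ! j = tm_omega (m + int j)"
    unfolding tm_lang_def by blast
  have a: "\<alpha> = seg (sq False) m (length \<alpha>)"
    by (rule nth_equalityI) (use m in \<open>simp_all add: seg_def omega_sq\<close>)
  show ?thesis
  proof (rule conjI)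
    show "\<exists>n g0 is g1. block_decomp n \<alpha> g0 is g1" using exist[OF assms(2), of m] a by simp
  next
    show "\<forall>n g0 is g1 g0' is' g1'.
             block_decomp n \<alpha> g0 is g1 \<and> block_decomp n \<alpha> g0' is' g1' \<longrightarrow>
             g0 = g0' \<and> is = is' \<and> g1 = g1'" using uniq a by blast
  qed
qed

end
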